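(* Let $X\in\mathbb{R}^{n\times p}$, $\beta^\star\in\mathbb{R}^p$ with support $T$, $|T|=k$, $e^\star\in\mathbb{R}^n$ with support $S$, $|S|=s$, $w\in\mathbb{R}^n$, and $y=X\beta^\star+\sqrt{n}\,e^\star+w$. Let $(\widehat\beta,\widehat e)$ be an optimal solution of the extended Lasso $$\min_{\beta\in\mathbb{R}^p,\,e\in\mathbb{R}^n}\ \frac{1}{2n}\|y-X\beta-\sqrt{n}\,e\|_2^2+\lambda_{n,\beta}\|\beta\|_1+\lambda_{n,e}\|e\|_1$$ with regularization parameters $$\lambda_{n,\beta}=\frac{2}{\gamma}\frac{\|X^{T}w\|_\infty}{n},\qquad \lambda_{n,e}=\frac{2\|w\|_\infty}{\sqrt n},$$ where $\gamma\in(0,1]$. Assume $X$ satisfies the extended restricted eigenvalue condition with constant $\kappa_l>0$ over the set $\mathbb{C}$ (defined with $\lambda=\lambda_{n,e}/\lambda_{n,\beta}$). Then the errors $h=\widehat\beta-\beta^\star$, $f=\widehat e-e^\star$ satisfy $$\|h\|_2+\|f\|_2\le 3\kappa_l^{-2}\big(\lambda_{n,\beta}\sqrt{k}+\lambda_{n,e}\sqrt{s}\big).$$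
   Context: Restricted set: for $\lambda>0$, $\mathbb{C}=\{(h,f)\in\mathbb{R}^p\times\mathbb{R}^n:\ \|h_{T^c}\|_1+\lambda\|f_{S^c}\|_1\le 3\|h_T\|_1+3\lambda\|f_S\|_1\}$, where $h_T$ denotes the restriction of $h$ to the coordinates in $T$. Extended restricted eigenvalue (extended RE) condition over $\mathbb{C}$ with constant $\kappa_l>0$: $\frac{1}{\sqrt n}\|Xh+\sqrt n f\|_2\ge\kappa_l(\|h\|_2+\|f\|_2)$ for all $(h,f)\in\mathbb{C}$. *)

theory Defs
  imports "HOL-Analysis.Analysis"
begin

definition l1norm :: "real^'n \<Rightarrow> real" where
  "l1norm x = (\<Sum>i\<in>UNIV. \<bar>x $ i\<bar>)"

definition linfnorm :: "real^'n \<Rightarrow> real" where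
  "linfnorm x = Max (range (\<lambda>i. \<bar>x $ i\<bar>))"

definition supp :: "real^'n \<Rightarrow> 'n set" where
  "supp x = {i. x $ i \<noteq> 0}"

definition restr :: "real^'n \<Rightarrow> 'n set \<Rightarrow> real^'n" where
  "restr x A = (\<chi> i. if i \<in> A then x $ i else 0)"

definition restricted_set :: "'p::finite set \<Rightarrow> 'n::finite set \<Rightarrow> real \<Rightarrow> ((real^'p) \<times> (real^'n)) set" where
  "restricted_set T S lam = {(h, f).
     l1norm (restr h (- T)) + lam * l1norm (restr f (- S))
       \<le> 3 * l1norm (restr h T) + 3 * lam * l1norm (restr f S)}"

definition extended_RE :: "real^('p::finite)^('n::finite) \<Rightarrow> 'p set \<Rightarrow> 'n set \<Rightarrow> real \<Rightarrow> real \<Rightarrow> bool" where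
  "extended_RE X T S lam \<kappa> \<longleftrightarrow>
     (\<forall>(h, f) \<in> restricted_set T S lam.
        (1 / sqrt (real CARD('n))) * norm (X *v h + sqrt (real CARD('n)) *\<^sub>R f)
          \<ge> \<kappa> * (norm h + norm f))"

definition ext_lasso_obj :: "real^('p::finite)^('n::finite) \<Rightarrow> real^'n \<Rightarrow> real \<Rightarrow> real \<Rightarrow> real^'p \<Rightarrow> real^'n \<Rightarrow> real" where
  "ext_lasso_obj X y lb le \<beta> e =
     1 / (2 * real CARD('n)) * (norm (y - X *v \<beta> - sqrt (real CARD('n)) *\<^sub>R e))\<^sup>2
     + lb * l1norm \<beta> + le * l1norm e"

end

theory Submission
  imports Defs
begin

lemma l1_restr: "l1norm (restr x A) = (\<Sum>i\<in>UNIV. if i \<in> A then \<bar>x $ i\<bar> else 0)"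
  unfolding l1norm_def restr_def by (rule sum.cong) auto

lemma l1_restr_le: "l1norm (restr (x::real^'n) A) \<le> sqrt (real (card A)) * norm x"
proof -
  define u :: "real^'n" where "u = (\<chi> i. if i \<in> A then \<bar>x$i\<bar> else 0)"
  define v :: "real^'n" where "v = (\<chi> i. if i \<in> A then 1 else 0)"
  have "l1norm (restr x A) = u \<bullet> v"
    unfolding l1_restr inner_vec_def u_def v_def by (rule sum.cong) auto
  also have "\<dots> \<le> norm u * norm v" by (rule norm_cauchy_schwarz)
  also have "norm v = sqrt (real (card A))"
  proof -
    have "norm v = sqrt (\<Sum>i\<in>UNIV. (if i \<in> A then 1 else 0))"
      unfolding norm_vec_def L2_set_def v_def by (intro arg_cong[where f=sqrt] sum.cong) auto
    also have "(\<Sum>i\<in>UNIV. (if i \<in> A then 1 else 0::real)) = real (card A)"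
      by (simp add: sum.If_cases)
    finally show ?thesis .
  qed
  also have "norm u \<le> norm x"
    unfolding norm_le inner_vec_def u_def
    by (intro sum_mono) auto
  finally show ?thesis by (simp add: mult_right_mono mult.commute)
qed

lemma inner_le_linf: "\<bar>(x::real^'n) \<bullet> y\<bar> \<le> linfnorm x * l1norm y"
proof -
  have M: "\<bar>x$i\<bar> \<le> linfnorm x" for i unfolding linfnorm_def
    by (rule Max_ge) auto
  have "\<bar>x \<bullet> y\<bar> \<le> (\<Sum>i\<in>UNIV. \<bar>x$i * y$i\<bar>)" unfolding inner_vec_def
    by (simp add: sum_abs)
  also have "\<dots> \<le> (\<Sum>i\<in>UNIV. linfnorm x * \<bar>y$i\<bar>)"
    by (intro sum_mono) (simp add: abs_mult M mult_right_mono)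
  finally show ?thesis by (simp add: l1norm_def sum_distrib_left)
qed

lemma linf_nonneg: "linfnorm (x::real^'n) \<ge> 0"
  unfolding linfnorm_def by (rule order_trans[OF abs_ge_zero Max_ge]) auto

lemma l1_nonneg: "l1norm (x::real^'n) \<ge> 0"
  unfolding l1norm_def by (rule sum_nonneg) auto

lemma supp_split: "(\<Sum>i\<in>UNIV. \<bar>h$i\<bar>/2 + \<bar>b$i\<bar> - \<bar>b$i + h$i\<bar>)
   \<le> 3/2 * l1norm (restr h (supp b)) - 1/2 * l1norm (restr h (- supp b))"
proof -
  have "(\<Sum>i\<in>UNIV. \<bar>h$i\<bar>/2 + \<bar>b$i\<bar> - \<bar>b$i + h$i\<bar>) \<le>
     (\<Sum>i\<in>UNIV. 3/2 * (if i \<in> supp b then \<bar>h $ i\<bar> else 0) - 1/2 * (if i \<in> - supp b then \<bar>h $ i\<bar> else 0))"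
    by (intro sum_mono) (auto simp: supp_def abs_if split: if_splits)
  thus ?thesis unfolding l1_restr by (simp add: sum_subtractf sum_distrib_left)
qed

theorem theorem1:
  fixes X :: "real^'p^'n" and \<beta>s \<beta>h :: "real^'p" and es eh w y :: "real^'n"
    and \<gamma> \<kappa> lb le :: real
  assumes y_def: "y = X *v \<beta>s + sqrt (real CARD('n)) *\<^sub>R es + w"
    and \<gamma>: "0 < \<gamma>" "\<gamma> \<le> 1"
    and lb_def: "lb = (2 / \<gamma>) * (linfnorm (transpose X *v w) / real CARD('n))"
    and le_def: "le = 2 * linfnorm w / sqrt (real CARD('n))"
    and lb_pos: "lb > 0"
    and opt: "\<forall>\<beta> e. ext_lasso_obj X y lb le \<beta>h eh \<le> ext_lasso_obj X y lb le \<beta> e"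
    and \<kappa>: "\<kappa> > 0"
    and RE: "extended_RE X (supp \<beta>s) (supp es) (le / lb) \<kappa>"
  shows "norm (\<beta>h - \<beta>s) + norm (eh - es)
           \<le> 3 / \<kappa>\<^sup>2 * (lb * sqrt (real (card (supp \<beta>s))) + le * sqrt (real (card (supp es))))"
proof -
  define N where "N = real CARD('n)"
  have N0: "N > 0" unfolding N_def by simp
  have sN: "sqrt N > 0" using N0 by simp
  have sNN: "sqrt N * sqrt N = N" using N0 by simp
  define h where "h = \<beta>h - \<beta>s"
  define f where "f = eh - es"
  define v where "v = X *v h + sqrt N *\<^sub>R f"
  define T where "T = supp \<beta>s"
  define S where "S = supp es"
  have r1: "y - X *v \<beta>h - sqrt N *\<^sub>R eh = w - v"
    unfolding y_def v_def h_def f_def N_def by (simp add: matrix_vector_mult_diff_distrib algebra_simps)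
  have r2: "y - X *v \<beta>s - sqrt N *\<^sub>R es = w"
    unfolding y_def N_def by simp
  have o: "ext_lasso_obj X y lb le \<beta>h eh \<le> ext_lasso_obj X y lb le \<beta>s es" using opt by blast
  hence o2: "1/(2*N) * (norm (w - v))\<^sup>2 + lb * l1norm \<beta>h + le * l1norm eh
      \<le> 1/(2*N) * (norm w)\<^sup>2 + lb * l1norm \<beta>s + le * l1norm es"
    unfolding ext_lasso_obj_def r1 r2 N_def[symmetric] .
  have ex: "(norm (w - v))\<^sup>2 = (norm w)\<^sup>2 - 2 * (w \<bullet> v) + (norm v)\<^sup>2"
    by (simp add: power2_norm_eq_inner inner_diff_left inner_diff_right inner_commute)
  define Q where "Q = (norm v)\<^sup>2 / (2*N)"
  have Q: "Q \<le> (w \<bullet> v)/N + lb * (l1norm \<beta>s - l1norm \<beta>h) + le * (l1norm es - l1norm eh)"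
  proof -
    have "1/(2*N)*(norm (w - v))\<^sup>2 = 1/(2*N)*(norm w)\<^sup>2 - (w \<bullet> v)/N + Q"
      unfolding ex Q_def using N0 by (simp add: field_simps)
    thus ?thesis using o2 by (simp add: algebra_simps)
  qed
  have wv: "w \<bullet> v = (transpose X *v w) \<bullet> h + sqrt N * (w \<bullet> f)"
    unfolding v_def by (simp add: inner_add_right dot_lmul_matrix)
  have lbe: "linfnorm (transpose X *v w) = lb * \<gamma> * N / 2"
    unfolding lb_def N_def using \<gamma> by simp
  have lee: "linfnorm w = le * sqrt N / 2"
    unfolding le_def N_def by simp
  have b1: "(transpose X *v w) \<bullet> h \<le> lb * N / 2 * l1norm h"
  proof -
    have "(transpose X *v w) \<bullet> h \<le> lb * \<gamma> * N / 2 * l1norm h"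
      using abs_le_D1[OF inner_le_linf[of "transpose X *v w" h]] unfolding lbe .
    also have "\<dots> \<le> lb * N / 2 * l1norm h"
      using \<gamma> lb_pos N0 l1_nonneg[of h] by (simp add: mult_le_cancel_left1 mult_right_mono mult_left_mono)
    finally show ?thesis .
  qed
  have b2: "sqrt N * (w \<bullet> f) \<le> le * N / 2 * l1norm f"
  proof -
    have "w \<bullet> f \<le> le * sqrt N / 2 * l1norm f"
      using abs_le_D1[OF inner_le_linf[of w f]] unfolding lee .
    hence "sqrt N * (w \<bullet> f) \<le> sqrt N * (le * sqrt N / 2 * l1norm f)"
      using sN by (simp add: mult_left_mono)
    also have "\<dots> = le * N / 2 * l1norm f" using sNN by (simp add: algebra_simps)
    finally show ?thesis .
  qed
  have wvN: "(w \<bullet> v)/N \<le> lb / 2 * l1norm h + le / 2 * l1norm f"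
    using b1 b2 N0 unfolding wv by (simp add: field_simps)
  have sb: "\<beta>h = \<beta>s + h" "eh = es + f" unfolding h_def f_def by simp_all
  have sp1: "lb / 2 * l1norm h + lb * (l1norm \<beta>s - l1norm \<beta>h)
     = lb * (\<Sum>i\<in>UNIV. \<bar>h$i\<bar>/2 + \<bar>\<beta>s$i\<bar> - \<bar>\<beta>s$i + h$i\<bar>)"
    unfolding sb l1norm_def by (simp add: sum.distrib sum_subtractf sum_divide_distrib[symmetric] algebra_simps)
  have sp2: "le / 2 * l1norm f + le * (l1norm es - l1norm eh)
     = le * (\<Sum>i\<in>UNIV. \<bar>f$i\<bar>/2 + \<bar>es$i\<bar> - \<bar>es$i + f$i\<bar>)"
    unfolding sb l1norm_def by (simp add: sum.distrib sum_subtractf sum_divide_distrib[symmetric] algebra_simps)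
  have le0: "le \<ge> 0" unfolding le_def using linf_nonneg[of w] by simp
  define hT where "hT = l1norm (restr h T)"
  define hTc where "hTc = l1norm (restr h (- T))"
  define fS where "fS = l1norm (restr f S)"
  define fSc where "fSc = l1norm (restr f (- S))"
  have QQ: "Q \<le> lb * (3/2 * hT - 1/2 * hTc) + le * (3/2 * fS - 1/2 * fSc)"
  proof -
    have "Q \<le> lb * (\<Sum>i\<in>UNIV. \<bar>h$i\<bar>/2 + \<bar>\<beta>s$i\<bar> - \<bar>\<beta>s$i + h$i\<bar>)
         + le * (\<Sum>i\<in>UNIV. \<bar>f$i\<bar>/2 + \<bar>es$i\<bar> - \<bar>es$i + f$i\<bar>)"
      using Q wvN sp1 sp2 by linarith
    also have "\<dots> \<le> lb * (3/2 * hT - 1/2 * hTc) + le * (3/2 * fS - 1/2 * fSc)"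
      unfolding hT_def hTc_def fS_def fSc_def T_def S_def
      by (intro add_mono mult_left_mono supp_split) (use lb_pos le0 in auto)
    finally show ?thesis .
  qed
  have Q0: "Q \<ge> 0" unfolding Q_def using N0 by simp
  have inC: "(h, f) \<in> restricted_set T S (le / lb)"
  proof -
    have "lb * hTc + le * fSc \<le> 3 * lb * hT + 3 * le * fS" 
    proof -
      have "lb*(3/2*hT - 1/2*hTc) + le*(3/2*fS - 1/2*fSc) = (3*lb*hT + 3*le*fS - (lb*hTc + le*fSc))/2"
        by (simp add: algebra_simps)
      moreover have "0 \<le> lb*(3/2*hT - 1/2*hTc) + le*(3/2*fS - 1/2*fSc)" using QQ Q0 by linarith
      ultimately have "0 \<le> (3*lb*hT + 3*le*fS - (lb*hTc + le*fSc))/2" by simp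
      thus ?thesis by simp
    qed
    hence "(lb * hTc + le * fSc) / lb \<le> (3 * lb * hT + 3 * le * fS) / lb"
      using lb_pos by (simp add: divide_right_mono)
    hence "hTc + le / lb * fSc \<le> 3 * hT + 3 * (le / lb) * fS"
      using lb_pos by (simp add: add_divide_distrib)
    thus ?thesis unfolding restricted_set_def hT_def hTc_def fS_def fSc_def by simp
  qed
  have re: "1 / sqrt N * norm v \<ge> \<kappa> * (norm h + norm f)"
    using RE inC unfolding extended_RE_def v_def N_def T_def S_def by blast
  define D where "D = norm h + norm f"
  define M where "M = lb * sqrt (real (card T)) + le * sqrt (real (card S))"
  have D0: "D \<ge> 0" unfolding D_def by simp
  have M0: "M \<ge> 0" unfolding M_def using lb_pos le0 by simp
  have kD: "(\<kappa> * D)\<^sup>2 \<le> 2 * Q"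
  proof -
    have "(\<kappa> * D)\<^sup>2 \<le> (1 / sqrt N * norm v)\<^sup>2"
      using re \<kappa> D0 unfolding D_def by (intro power_mono) auto
    also have "\<dots> = (norm v)\<^sup>2 / N" using N0 by (simp add: power_divide)
    also have "\<dots> = 2 * Q" unfolding Q_def using N0 by simp
    finally show ?thesis .
  qed
  have QM: "2 * Q \<le> 3 * M * D"
  proof -
    have n1: "0 \<le> lb*hTc" "0 \<le> le*fSc"
      unfolding hTc_def fSc_def using l1_nonneg lb_pos le0 by (auto intro!: mult_nonneg_nonneg)
    have e1: "2*(lb*(3/2*hT - 1/2*hTc) + le*(3/2*fS - 1/2*fSc)) = 3*(lb*hT + le*fS) - lb*hTc - le*fSc"
      by (simp add: algebra_simps)
    obtain A where A: "A = lb*(3/2*hT - 1/2*hTc) + le*(3/2*fS - 1/2*fSc)" by blast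
    have "2 * Q \<le> 3 * (lb * hT + le * fS)"
      using QQ n1 e1 unfolding A[symmetric] by linarith
    also have "\<dots> \<le> 3 * (lb * (sqrt (real (card T)) * norm h) + le * (sqrt (real (card S)) * norm f))"
      unfolding hT_def fS_def using lb_pos le0
      by (intro mult_left_mono add_mono l1_restr_le) auto
    also have "\<dots> \<le> 3 * M * D"
    proof -
      have n2: "0 \<le> lb * sqrt (real (card T)) * norm f" "0 \<le> le * sqrt (real (card S)) * norm h"
        using lb_pos le0 by auto
      have e2: "M*D = lb * (sqrt (real (card T)) * norm h) + le * (sqrt (real (card S)) * norm f)
          + lb * sqrt (real (card T)) * norm f + le * sqrt (real (card S)) * norm h"
        unfolding M_def D_def by (simp add: algebra_simps)
      obtain P a b c d where ab: "P = M*D" "a = lb * (sqrt (real (card T)) * norm h)"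
        "b = le * (sqrt (real (card S)) * norm f)" "c = lb * sqrt (real (card T)) * norm f"
        "d = le * sqrt (real (card S)) * norm h" by blast
      have "3 * (a + b) \<le> 3 * P" using e2 n2 unfolding ab[symmetric] by (simp add: add_increasing2)
      thus ?thesis unfolding ab by (simp add: mult.assoc)
    qed
    finally show ?thesis .
  qed
  have sq: "(\<kappa> * D)\<^sup>2 = \<kappa>\<^sup>2 * D * D" by (simp add: power2_eq_square)
  have key: "\<kappa>\<^sup>2 * D * D \<le> 3 * M * D" using kD QM sq by linarith
  have "D \<le> 3 * M / \<kappa>\<^sup>2"
  proof (cases "D = 0")
    case True thus ?thesis using M0 by simp
  next
    case False
    hence "D > 0" using D0 by simp
    hence "\<kappa>\<^sup>2 * D \<le> 3 * M" using key by (simp add: mult_le_cancel_right algebra_simps)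
    thus ?thesis using \<kappa> by (simp add: field_simps)
  qed
  thus ?thesis unfolding D_def M_def h_def f_def T_def S_def by simp
qed

end
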